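(* Let $K$ be a $\lambda$-fat convex body in the plane, $\lambda\in(0,1]$. Then its geometric dilation satisfies \[\delta(K)\le\min\{\pi\lambda^{-1},\;2(\lambda^{-1}+1)\}.\]
   Context: The width of a convex body $K$ is the minimum width of a parallel slab containing $K$; $K$ is $\lambda$-fat if ${\rm width}(K)/{\rm diam}_2(K)\ge\lambda$. For $s,t\in\partial K$, let ${\rm geod}(s,t)$ be the length of the shorter of the two arcs of $\partial K$ between $s$ and $t$. The geometric dilation of $K$ is $\delta(K)=\sup_{s,t\in\partial K,\,s\ne t}{\rm geod}(s,t)/|st|$. *)

theory Defs
  imports "HOL-Analysis.Analysis"
begin

definition convex_body :: "(real^2) set \<Rightarrow> bool" where
  "convex_body K \<longleftrightarrow> compact K \<and> convex K \<and> interior K \<noteq> {}"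

definition width :: "(real^2) set \<Rightarrow> real" where
  "width K = Inf {b - a | u a b. norm u = 1 \<and> K \<subseteq> {x. a \<le> u \<bullet> x \<and> u \<bullet> x \<le> b}}"

definition fat :: "real \<Rightarrow> (real^2) set \<Rightarrow> bool" where
  "fat l K \<longleftrightarrow> width K / diameter K \<ge> l"

definition curve_length :: "(real \<Rightarrow> real^2) \<Rightarrow> ereal" where
  "curve_length g = (SUP (n, t) \<in> {(n, t). t 0 = (0::real) \<and> t n = 1 \<and> (\<forall>i<n. t i \<le> t (Suc i))}.
       ereal (\<Sum>i<n. dist (g (t i)) (g (t (Suc i)))))"

text \<open>geod(s,t): length of the shorter of the two arcs of the boundary between s and t,
  i.e. the minimum length over all arcs contained in the boundary joining s to t.\<close>
definition geod :: "(real^2) set \<Rightarrow> real^2 \<Rightarrow> real^2 \<Rightarrow> ereal" where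
  "geod K s t = (INF g \<in> {g. arc g \<and> path_image g \<subseteq> frontier K \<and> pathstart g = s \<and> pathfinish g = t}.
       curve_length g)"

definition geometric_dilation :: "(real^2) set \<Rightarrow> ereal" where
  "geometric_dilation K = (SUP (s, t) \<in> {(s, t). s \<in> frontier K \<and> t \<in> frontier K \<and> s \<noteq> t}.
       geod K s t / ereal (dist s t))"

end

theory Submission
  imports Defs
begin

lemma part_mono:
  fixes tt :: "nat \<Rightarrow> real"
  assumes "\<forall>i<n. tt i \<le> tt (Suc i)" "i \<le> j" "j \<le> n"
  shows "tt i \<le> tt j"
  using assms(2,3)
proof (induction j)
  case 0 then show ?case by simp
next
  case (Suc j)
  show ?case
  proof (cases "i = Suc j")
    case True then show ?thesis by simp
  next
    case False
    then have "i \<le> j" using Suc.prems by simp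
    then have "tt i \<le> tt j" using Suc by simp
    also have "tt j \<le> tt (Suc j)" using assms(1) Suc.prems by simp
    finally show ?thesis .
  qed
qed

lemma tv_mono:
  fixes f :: "real \<Rightarrow> real" and tt :: "nat \<Rightarrow> real"
  assumes "\<forall>i<n. tt i \<le> tt (Suc i)"
    and "\<And>x y. x \<le> y \<Longrightarrow> f x \<le> f y"
  shows "(\<Sum>i<n. \<bar>f (tt (Suc i)) - f (tt i)\<bar>) = f (tt n) - f (tt 0)"
proof -
  have "(\<Sum>i<n. \<bar>f (tt (Suc i)) - f (tt i)\<bar>) = (\<Sum>i<n. f (tt (Suc i)) - f (tt i))"
    using assms by (intro sum.cong) auto
  also have "\<dots> = f (tt n) - f (tt 0)" by (rule sum_lessThan_telescope)
  finally show ?thesis .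
qed

lemma tv_qc:
  fixes f :: "real \<Rightarrow> real" and tt :: "nat \<Rightarrow> real"
  assumes mono: "\<forall>i<n. tt i \<le> tt (Suc i)"
    and rng: "\<forall>i\<le>n. tt i \<in> {0..1}"
    and qc: "\<And>x y z. 0 \<le> x \<Longrightarrow> x \<le> y \<Longrightarrow> y \<le> z \<Longrightarrow> z \<le> 1 \<Longrightarrow> min (f x) (f z) \<le> f y"
    and bnd: "\<And>x. x \<in> {0..1} \<Longrightarrow> f x \<le> R"
  shows "(\<Sum>i<n. \<bar>f (tt (Suc i)) - f (tt i)\<bar>) \<le> 2*R - f (tt 0) - f (tt n)"
  using mono rng
proof (induction n)
  case 0
  then show ?case using bnd[of "tt 0"] by simp
next
  case (Suc n)
  have IH: "(\<Sum>i<n. \<bar>f (tt (Suc i)) - f (tt i)\<bar>) \<le> 2*R - f (tt 0) - f (tt n)"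
    using Suc by auto
  have pm: "\<And>i j. i \<le> j \<Longrightarrow> j \<le> Suc n \<Longrightarrow> tt i \<le> tt j"
    using part_mono[OF Suc.prems(1)] by blast
  have r: "\<And>i. i \<le> Suc n \<Longrightarrow> 0 \<le> tt i \<and> tt i \<le> 1" using Suc.prems(2) by auto
  show ?case
  proof (cases "f (tt (Suc n)) \<le> f (tt n)")
    case True
    then show ?thesis using IH by simp
  next
    case False
    have step: "f (tt i) \<le> f (tt (Suc i))" if "i < n" for i
    proof -
      have a1: "min (f (tt i)) (f (tt (Suc n))) \<le> f (tt (Suc i))"
        using qc[of "tt i" "tt (Suc i)" "tt (Suc n)"] r[of i] r[of "Suc n"] pm[of i "Suc i"] pm[of "Suc i" "Suc n"] that
        by auto
      have a2: "min (f (tt (Suc i))) (f (tt (Suc n))) \<le> f (tt n)"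
        using qc[of "tt (Suc i)" "tt n" "tt (Suc n)"] r[of "Suc i"] r[of "Suc n"] pm[of "Suc i" n] pm[of n "Suc n"] that
        by auto
      show ?thesis using a1 a2 False by (auto simp: min_def split: if_splits)
    qed
    have "(\<Sum>i<n. \<bar>f (tt (Suc i)) - f (tt i)\<bar>) = (\<Sum>i<n. f (tt (Suc i)) - f (tt i))"
      using step by (intro sum.cong) auto
    also have "\<dots> = f (tt n) - f (tt 0)" by (rule sum_lessThan_telescope)
    finally have "(\<Sum>i<Suc n. \<bar>f (tt (Suc i)) - f (tt i)\<bar>) = f (tt (Suc n)) - f (tt 0)"
      using False by simp
    then show ?thesis using bnd[of "tt (Suc n)"] r[of "Suc n"] by simp
  qed
qed

lemma part_range:
  fixes tt :: "nat \<Rightarrow> real"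
  assumes "tt 0 = 0" "tt n = 1" "\<forall>i<n. tt i \<le> tt (Suc i)" "i \<le> n"
  shows "tt i \<in> {0..1}"
  using part_mono[OF assms(3), of 0 i] part_mono[OF assms(3), of i n] assms by auto

lemma curve_length_le:
  assumes "\<And>n tt. tt 0 = 0 \<Longrightarrow> tt n = 1 \<Longrightarrow> \<forall>i<n. tt i \<le> tt (Suc i) \<Longrightarrow>
     (\<Sum>i<n. dist (g (tt i)) (g (tt (Suc i)))) \<le> B"
  shows "curve_length g \<le> ereal B"
  unfolding curve_length_def using assms by (auto intro!: SUP_least)

lemma graph_length:
  fixes s t v :: "real^2" and X Y :: "real \<Rightarrow> real"
  assumes g: "\<And>x. g x = s + X x *\<^sub>R (t - s) + Y x *\<^sub>R v"
    and Xm: "\<And>x y. 0 \<le> x \<Longrightarrow> x \<le> y \<Longrightarrow> y \<le> 1 \<Longrightarrow> X x \<le> X y"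
    and X0: "X 0 = 0" and X1: "X 1 = 1"
    and YV: "\<And>n tt. tt 0 = 0 \<Longrightarrow> tt n = 1 \<Longrightarrow> \<forall>i<n. tt i \<le> tt (Suc i) \<Longrightarrow>
       (\<Sum>i<n. \<bar>Y (tt (Suc i)) - Y (tt i)\<bar>) \<le> V"
  shows "curve_length g \<le> ereal (norm (t - s) + norm v * V)"
proof (rule curve_length_le)
  fix n and tt :: "nat \<Rightarrow> real"
  assume h: "tt 0 = 0" "tt n = 1" "\<forall>i<n. tt i \<le> tt (Suc i)"
  have rng: "\<And>i. i \<le> n \<Longrightarrow> tt i \<in> {0..1}" using part_range[OF h] by blast
  have d: "dist (g (tt i)) (g (tt (Suc i))) \<le>
      (X (tt (Suc i)) - X (tt i)) * norm (t - s) + norm v * \<bar>Y (tt (Suc i)) - Y (tt i)\<bar>"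
    if "i < n" for i
  proof -
    have xm: "X (tt i) \<le> X (tt (Suc i))"
      using Xm[of "tt i" "tt (Suc i)"] rng[of i] rng[of "Suc i"] h(3) that by auto
    have "g (tt (Suc i)) - g (tt i) = (X (tt (Suc i)) - X (tt i)) *\<^sub>R (t - s) + (Y (tt (Suc i)) - Y (tt i)) *\<^sub>R v"
      by (simp add: g algebra_simps)
    then have "dist (g (tt i)) (g (tt (Suc i))) = norm ((X (tt (Suc i)) - X (tt i)) *\<^sub>R (t - s) + (Y (tt (Suc i)) - Y (tt i)) *\<^sub>R v)"
      by (metis dist_norm dist_commute)
    also have "\<dots> \<le> norm ((X (tt (Suc i)) - X (tt i)) *\<^sub>R (t - s)) + norm ((Y (tt (Suc i)) - Y (tt i)) *\<^sub>R v)"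
      by (rule norm_triangle_ineq)
    also have "\<dots> = (X (tt (Suc i)) - X (tt i)) * norm (t - s) + norm v * \<bar>Y (tt (Suc i)) - Y (tt i)\<bar>"
      using xm by (simp add: mult.commute)
    finally show ?thesis .
  qed
  have "(\<Sum>i<n. dist (g (tt i)) (g (tt (Suc i)))) \<le>
     (\<Sum>i<n. (X (tt (Suc i)) - X (tt i)) * norm (t - s) + norm v * \<bar>Y (tt (Suc i)) - Y (tt i)\<bar>)"
    using d by (intro sum_mono) auto
  also have "\<dots> = (\<Sum>i<n. X (tt (Suc i)) - X (tt i)) * norm (t - s) + norm v * (\<Sum>i<n. \<bar>Y (tt (Suc i)) - Y (tt i)\<bar>)"
    by (simp add: sum.distrib sum_distrib_left sum_distrib_right)
  also have "(\<Sum>i<n. X (tt (Suc i)) - X (tt i)) = 1"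
    using sum_lessThan_telescope[of "\<lambda>i. X (tt i)" n] h X0 X1 by simp
  also have "norm v * (\<Sum>i<n. \<bar>Y (tt (Suc i)) - Y (tt i)\<bar>) \<le> norm v * V"
    using YV[OF h] by (intro mult_left_mono) auto
  finally show "(\<Sum>i<n. dist (g (tt i)) (g (tt (Suc i)))) \<le> norm (t - s) + norm v * V" by simp
qed

lemma width_le:
  fixes K :: "(real^2) set" and w :: "real^2"
  assumes "norm w = 1" "K \<noteq> {}" "\<And>x. x \<in> K \<Longrightarrow> \<alpha> \<le> w \<bullet> x \<and> w \<bullet> x \<le> \<beta>"
  shows "width K \<le> \<beta> - \<alpha>"
proof -
  obtain y where y: "y \<in> K" using assms(2) by auto
  have bdd: "bdd_below {b - a | u a b. norm u = 1 \<and> K \<subseteq> {x. a \<le> u \<bullet> x \<and> u \<bullet> x \<le> b}}"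
  proof (rule bdd_belowI[of _ 0])
    fix z assume "z \<in> {b - a | u a b. norm u = 1 \<and> K \<subseteq> {x. a \<le> u \<bullet> x \<and> u \<bullet> x \<le> b}}"
    then obtain u a b where "z = b - a" "K \<subseteq> {x. a \<le> u \<bullet> x \<and> u \<bullet> x \<le> b}" by auto
    then show "0 \<le> z" using y by auto
  qed
  have "\<beta> - \<alpha> \<in> {b - a | u a b. norm u = 1 \<and> K \<subseteq> {x. a \<le> u \<bullet> x \<and> u \<bullet> x \<le> b}}"
    using assms by blast
  then show ?thesis unfolding width_def by (rule cInf_lower[OF _ bdd])
qed

locale chord =
  fixes K :: "(real^2) set" and s t n :: "real^2" and a b :: real
  assumes cvx: "convex K" and cpt: "compact K" and sK: "s \<in> K" and tK: "t \<in> K" and st: "s \<noteq> t"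
    and nunit: "norm n = 1" and nort: "n \<bullet> (t - s) = 0"
    and supp: "\<And>x. x \<in> K \<Longrightarrow> a * ((x - s) \<bullet> n) \<le> (x - s) \<bullet> ((1 / dist s t) *\<^sub>R (t - s))
                   \<and> (x - s) \<bullet> ((1 / dist s t) *\<^sub>R (t - s)) \<le> dist s t - b * ((x - s) \<bullet> n)"
    and ab: "0 \<le> a + b"
begin

definition "L = dist s t"
definition "uu = (1 / L) *\<^sub>R (t - s)"
definition "Xc x = (x - s) \<bullet> uu"
definition "Yc x = (x - s) \<bullet> n"
definition "kk = (a - b) / 2"
definition "vv = kk *\<^sub>R uu + n"
definition "mm x = s + x *\<^sub>R (t - s)"
definition "Rs x = {r. 0 \<le> r \<and> mm x + r *\<^sub>R vv \<in> K}"
definition "rho x = Sup (Rs x)"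
definition "DD = diameter K"

lemma Lpos: "0 < L" using st unfolding L_def by simp

lemma uu_norm: "uu \<bullet> uu = 1"
proof -
  have "uu \<bullet> uu = (1/L)^2 * ((t - s) \<bullet> (t - s))" by (simp add: uu_def power2_eq_square)
  also have "(t - s) \<bullet> (t - s) = L^2" by (simp add: L_def dist_norm power2_norm_eq_inner[symmetric] norm_minus_commute)
  finally show ?thesis using Lpos by (simp add: field_simps)
qed

lemma nn: "n \<bullet> n = 1" using nunit by (simp add: power2_norm_eq_inner[symmetric])
lemma un: "uu \<bullet> n = 0" using nort by (simp add: uu_def inner_commute)
lemma tsu: "(t - s) \<bullet> uu = L"
proof -
  have "(t - s) = L *\<^sub>R uu" using Lpos by (simp add: uu_def)
  then have "(t - s) \<bullet> uu = L * (uu \<bullet> uu)" by (simp add: inner_commute)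
  then show ?thesis using uu_norm by simp
qed
lemma tsn: "(t - s) \<bullet> n = 0" using nort by (simp add: inner_commute)

end

context chord begin

lemma nu: "n \<bullet> uu = 0" using un by (simp add: inner_commute)

lemma supp': "x \<in> K \<Longrightarrow> a * Yc x \<le> Xc x \<and> Xc x \<le> L - b * Yc x"
  using supp[of x] by (simp add: Xc_def Yc_def uu_def L_def)

lemma Xc_pt: "Xc (mm x + r *\<^sub>R vv) = x * L + r * kk"
proof -
  have "Xc (mm x + r *\<^sub>R vv) = x * ((t - s) \<bullet> uu) + r * (kk * (uu \<bullet> uu) + n \<bullet> uu)"
    by (simp add: Xc_def mm_def vv_def inner_add_left inner_add_right)
  also have "\<dots> = x * L + r * kk" by (simp add: tsu uu_norm nu)
  finally show ?thesis .
qed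

lemma Yc_pt: "Yc (mm x + r *\<^sub>R vv) = r"
proof -
  have "Yc (mm x + r *\<^sub>R vv) = x * ((t - s) \<bullet> n) + r * (kk * (uu \<bullet> n) + n \<bullet> n)"
    by (simp add: Yc_def mm_def vv_def inner_add_left inner_add_right)
  also have "\<dots> = r" by (simp add: tsn nn un)
  finally show ?thesis .
qed

lemma vv_norm: "norm vv = sqrt (1 + kk^2)"
proof -
  have "vv \<bullet> vv = kk * kk * (uu \<bullet> uu) + kk * (uu \<bullet> n) + kk * (n \<bullet> uu) + n \<bullet> n"
    by (simp add: vv_def inner_add_left inner_add_right algebra_simps)
  also have "\<dots> = kk^2 + 1" by (simp add: uu_norm un nn nu power2_eq_square)
  finally show ?thesis by (simp add: norm_eq_sqrt_inner)
qed

end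

context chord begin

lemma bK: "bounded K" using cpt by (simp add: compact_imp_bounded)

lemma distD: "x \<in> K \<Longrightarrow> y \<in> K \<Longrightarrow> dist x y \<le> DD"
  unfolding DD_def using diameter_bounded_bound bK by blast

lemma Yc_diff: "Yc x - Yc y \<le> dist x y"
proof -
  have "Yc x - Yc y = (x - y) \<bullet> n" by (simp add: Yc_def inner_diff_left)
  also have "\<dots> \<le> norm (x - y) * norm n" by (metis Cauchy_Schwarz_ineq2 abs_le_iff)
  finally show ?thesis using nunit by (simp add: dist_norm)
qed

lemma mmK: "x \<in> {0..1} \<Longrightarrow> mm x \<in> K"
proof -
  assume x: "x \<in> {0..1}"
  have "mm x = (1 - x) *\<^sub>R s + x *\<^sub>R t" by (simp add: mm_def algebra_simps)
  then show ?thesis using cvx sK tK x by (simp add: convex_def)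
qed

lemma Rs_bound: "r \<in> Rs x \<Longrightarrow> r \<le> DD"
proof -
  assume r: "r \<in> Rs x"
  have "Yc (mm x + r *\<^sub>R vv) - Yc s \<le> dist (mm x + r *\<^sub>R vv) s" by (rule Yc_diff)
  moreover have "dist (mm x + r *\<^sub>R vv) s \<le> DD" using r sK distD unfolding Rs_def by blast
  moreover have "Yc s = 0" by (simp add: Yc_def)
  ultimately show ?thesis by (simp add: Yc_pt)
qed

lemma Rs_closed: "closed (Rs x)"
proof -
  have "Rs x = {0..} \<inter> (\<lambda>r. mm x + r *\<^sub>R vv) -` K" by (auto simp: Rs_def)
  moreover have "closed ((\<lambda>r. mm x + r *\<^sub>R vv) -` K)"
    by (rule continuous_closed_vimage) (auto intro!: continuous_intros simp: compact_imp_closed cpt)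
  ultimately show ?thesis by (auto intro: closed_Int)
qed

lemma rho_props:
  assumes "x \<in> {0..1}"
  shows "rho x \<in> Rs x" "0 \<le> rho x" "rho x \<le> DD" "\<And>r. r \<in> Rs x \<Longrightarrow> r \<le> rho x"
proof -
  have ne: "0 \<in> Rs x" using mmK[OF assms] by (simp add: Rs_def)
  have bdd: "bdd_above (Rs x)" by (rule bdd_aboveI[of _ DD]) (rule Rs_bound)
  show m: "rho x \<in> Rs x" unfolding rho_def using closed_contains_Sup[OF _ bdd Rs_closed] ne by blast
  show "\<And>r. r \<in> Rs x \<Longrightarrow> r \<le> rho x" unfolding rho_def using bdd by (simp add: cSup_upper)
  then show "0 \<le> rho x" using ne by blast
  show "rho x \<le> DD" using m Rs_bound by blast
qed

lemma rho_K: "x \<in> {0..1} \<Longrightarrow> mm x + rho x *\<^sub>R vv \<in> K"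
  using rho_props(1) by (simp add: Rs_def)

lemma concave_rho:
  assumes "p \<in> {0..1}" "r \<in> {0..1}" "0 \<le> l" "l \<le> 1"
  shows "(1 - l) * rho p + l * rho r \<le> rho ((1 - l) * p + l * r)"
proof -
  have q: "(1 - l) * p + l * r \<in> {0..1}"
  proof -
    have "0 \<le> (1 - l) * p + l * r" using assms by auto
    moreover have "(1 - l) * p + l * r \<le> (1 - l) * 1 + l * 1"
      using assms by (intro add_mono mult_left_mono) auto
    ultimately show ?thesis by simp
  qed
  have "(1 - l) *\<^sub>R (mm p + rho p *\<^sub>R vv) + l *\<^sub>R (mm r + rho r *\<^sub>R vv) \<in> K"
    using cvx rho_K[OF assms(1)] rho_K[OF assms(2)] assms(3,4) by (simp add: convex_def)
  moreover have "(1 - l) *\<^sub>R (mm p + rho p *\<^sub>R vv) + l *\<^sub>R (mm r + rho r *\<^sub>R vv)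
      = mm ((1 - l) * p + l * r) + ((1 - l) * rho p + l * rho r) *\<^sub>R vv"
    by (simp add: mm_def algebra_simps)
  ultimately have "(1 - l) * rho p + l * rho r \<in> Rs ((1 - l) * p + l * r)"
    using rho_props(2)[OF assms(1)] rho_props(2)[OF assms(2)] assms(3,4) by (simp add: Rs_def)
  then show ?thesis using rho_props(4)[OF q] by blast
qed

lemma qc_rho:
  assumes "0 \<le> p" "p \<le> q" "q \<le> r" "r \<le> 1"
  shows "min (rho p) (rho r) \<le> rho q"
proof (cases "p = r")
  case True then show ?thesis using assms by auto
next
  case False
  define l where "l = (q - p) / (r - p)"
  have l01: "0 \<le> l" "l \<le> 1" using assms False by (auto simp: l_def field_simps)
  have rp: "r - p > 0" using False assms by simp
  have "l * (r - p) = q - p" using rp by (simp add: l_def)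
  then have e: "l * r - l * p = q - p" by (simp add: right_diff_distrib)
  have "q = (1 - l) * p + l * r" using e by (simp add: algebra_simps)
  then have "(1 - l) * rho p + l * rho r \<le> rho q"
    using concave_rho[of p r l] assms l01 by auto
  moreover have "min (rho p) (rho r) \<le> (1 - l) * rho p + l * rho r"
  proof -
    have "min (rho p) (rho r) = (1 - l) * min (rho p) (rho r) + l * min (rho p) (rho r)" by (simp add: algebra_simps)
    also have "\<dots> \<le> (1 - l) * rho p + l * rho r"
      using l01 by (intro add_mono mult_left_mono) auto
    finally show ?thesis .
  qed
  ultimately show ?thesis by linarith
qed

end

context chord begin

lemma rho_usc:
  assumes x0: "x0 \<in> {0..1}" and e: "0 < e"
  shows "\<exists>d>0. \<forall>x\<in>{0..1}. dist x x0 < d \<longrightarrow> rho x < rho x0 + e"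
proof -
  define C where "C = ({0..1} \<times> {rho x0 + e..DD}) \<inter> (\<lambda>z. mm (fst z) + snd z *\<^sub>R vv) -` K"
  have "closed ((\<lambda>z. mm (fst z) + snd z *\<^sub>R vv) -` K)"
    by (rule continuous_closed_vimage) (auto intro!: continuous_intros simp: compact_imp_closed cpt mm_def)
  then have "compact C" unfolding C_def by (intro compact_Int_closed compact_Times compact_Icc)
  then have "compact (fst ` C)" by (intro compact_continuous_image continuous_intros)
  then have cl: "closed (fst ` C)" by (rule compact_imp_closed)
  have nin: "x0 \<notin> fst ` C"
  proof
    assume "x0 \<in> fst ` C"
    then obtain r where r: "(x0, r) \<in> C" by force
    then have "rho x0 + e \<le> r" "mm x0 + r *\<^sub>R vv \<in> K" by (auto simp: C_def)
    moreover have "0 \<le> rho x0" using rho_props(2)[OF x0] .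
    ultimately have "r \<in> Rs x0" using e by (simp add: Rs_def)
    then have "r \<le> rho x0" using rho_props(4)[OF x0] by blast
    then show False using \<open>rho x0 + e \<le> r\<close> e by simp
  qed
  have "open (- fst ` C)" using cl by (simp add: open_Compl)
  then obtain d where d: "d > 0" "\<And>y. dist y x0 < d \<Longrightarrow> y \<in> - fst ` C"
    using nin unfolding open_dist by blast
  show ?thesis
  proof (intro exI[of _ d] conjI ballI impI d(1))
    fix x assume x: "x \<in> {0..1}" "dist x x0 < d"
    show "rho x < rho x0 + e"
    proof (rule ccontr)
      assume "\<not> rho x < rho x0 + e"
      then have "(x, rho x) \<in> C" using x rho_props[OF x(1)] rho_K[OF x(1)] by (auto simp: C_def)
      then have "x \<in> fst ` C" by force
      then show False using d(2)[OF x(2)] by simp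
    qed
  qed
qed

definition "gap x0 = min (if 0 < x0 then x0 else 1) (if x0 < 1 then 1 - x0 else (1::real))"

lemma gap_pos: "x0 \<in> {0..1} \<Longrightarrow> 0 < gap x0" by (auto simp: gap_def)

lemma rho_lsc:
  assumes x0: "x0 \<in> {0..1}" and x: "x \<in> {0..1}"
  shows "rho x0 - rho x \<le> DD * \<bar>x - x0\<bar> / gap x0"
proof -
  have D0: "0 \<le> DD" using rho_props(2,3)[OF x0] by linarith
  have g0: "0 < gap x0" using gap_pos[OF x0] .
  consider "x = x0" | "x0 < x" | "x < x0" by linarith
  then show ?thesis
  proof cases
    case 1 then show ?thesis by simp
  next
    case 2
    define l where "l = (x - x0) / (1 - x0)"
    have x01: "x0 < 1" using 2 x by simp
    have l01: "0 \<le> l" "l \<le> 1" using 2 x x01 by (auto simp: l_def field_simps)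
    have "l * (1 - x0) = x - x0" using x01 by (simp add: l_def)
    then have xe: "x = (1 - l) * x0 + l * 1" by (simp add: algebra_simps)
    have "(1 - l) * rho x0 + l * rho 1 \<le> rho x" using concave_rho[OF x0 _ l01, of 1] xe by simp
    moreover have "0 \<le> rho 1" using rho_props(2)[of 1] by simp
    ultimately have "rho x0 - rho x \<le> l * rho x0" using l01 by (simp add: algebra_simps)
      (smt (verit) mult_nonneg_nonneg)
    also have "\<dots> \<le> l * DD" using rho_props(3)[OF x0] l01 by (simp add: mult_left_mono)
    also have "l \<le> \<bar>x - x0\<bar> / gap x0"
    proof -
      have "gap x0 \<le> 1 - x0" using x01 by (simp add: gap_def)
      then have "(x - x0) / (1 - x0) \<le> (x - x0) / gap x0" using 2 g0 by (intro divide_left_mono) auto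
      then show ?thesis using 2 by (simp add: l_def)
    qed
    then have "l * DD \<le> \<bar>x - x0\<bar> / gap x0 * DD" using D0 by (rule mult_right_mono)
    finally show ?thesis by (simp add: mult.commute)
  next
    case 3
    define l where "l = (x0 - x) / x0"
    have x01: "0 < x0" using 3 x by simp
    have l01: "0 \<le> l" "l \<le> 1" using 3 x x01 by (auto simp: l_def field_simps)
    have "l * x0 = x0 - x" using x01 by (simp add: l_def)
    then have xe: "x = (1 - l) * x0 + l * 0" by (simp add: algebra_simps)
    have "(1 - l) * rho x0 + l * rho 0 \<le> rho x" using concave_rho[OF x0 _ l01, of 0] xe by simp
    moreover have "0 \<le> rho 0" using rho_props(2)[of 0] by simp
    ultimately have "rho x0 - rho x \<le> l * rho x0" using l01 by (simp add: algebra_simps)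
      (smt (verit) mult_nonneg_nonneg)
    also have "\<dots> \<le> l * DD" using rho_props(3)[OF x0] l01 by (simp add: mult_left_mono)
    also have "l \<le> \<bar>x - x0\<bar> / gap x0"
    proof -
      have "gap x0 \<le> x0" using x01 by (simp add: gap_def)
      then have "(x0 - x) / x0 \<le> (x0 - x) / gap x0" using 3 g0 by (intro divide_left_mono) auto
      then show ?thesis using 3 by (simp add: l_def)
    qed
    then have "l * DD \<le> \<bar>x - x0\<bar> / gap x0 * DD" using D0 by (rule mult_right_mono)
    finally show ?thesis by (simp add: mult.commute)
  qed
qed

lemma rho_cont: "continuous_on {0..1} rho"
  unfolding continuous_on_iff
proof (intro ballI allI impI)
  fix x0 e :: real assume x0: "x0 \<in> {0..1}" and e: "0 < e"
  obtain d1 where d1: "d1 > 0" "\<And>x. x\<in>{0..1} \<Longrightarrow> dist x x0 < d1 \<Longrightarrow> rho x < rho x0 + e"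
    using rho_usc[OF x0 e] by blast
  have D0: "0 \<le> DD" using rho_props(2,3)[OF x0] by linarith
  have g0: "0 < gap x0" using gap_pos[OF x0] .
  define d where "d = min d1 (e * gap x0 / (DD + 1))"
  have dpos: "d > 0" using d1 e g0 D0 by (simp add: d_def)
  show "\<exists>d>0. \<forall>x'\<in>{0..1}. dist x' x0 < d \<longrightarrow> dist (rho x') (rho x0) < e"
  proof (intro exI[of _ d] conjI ballI impI dpos)
    fix x assume x: "x \<in> {0..1}" "dist x x0 < d"
    have up: "rho x < rho x0 + e" using d1(2)[OF x(1)] x(2) by (simp add: d_def)
    have "rho x0 - rho x \<le> DD * \<bar>x - x0\<bar> / gap x0" by (rule rho_lsc[OF x0 x(1)])
    also have "\<dots> < e"
    proof -
      have "\<bar>x - x0\<bar> < e * gap x0 / (DD + 1)" using x(2) by (simp add: d_def dist_real_def)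
      then have "\<bar>x - x0\<bar> * (DD + 1) < e * gap x0" using D0 by (simp add: pos_less_divide_eq)
      moreover have "DD * \<bar>x - x0\<bar> \<le> \<bar>x - x0\<bar> * (DD + 1)" by (simp add: algebra_simps)
      ultimately have "DD * \<bar>x - x0\<bar> < e * gap x0" by linarith
      then show ?thesis using g0 by (simp add: pos_divide_less_eq)
    qed
    finally show "dist (rho x) (rho x0) < e" using up by (simp add: dist_real_def abs_less_iff)
  qed
qed

end

context chord begin

lemma Xc_add: "Xc (x + c *\<^sub>R w) = Xc x + c * (w \<bullet> uu)"
  by (simp add: Xc_def inner_add_left inner_diff_left algebra_simps)
lemma Yc_add: "Yc (x + c *\<^sub>R w) = Yc x + c * (w \<bullet> n)"
  by (simp add: Yc_def inner_add_left inner_diff_left algebra_simps)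

lemma int_cball: "x \<in> interior K \<Longrightarrow> \<exists>e>0. \<forall>w. norm w \<le> e \<longrightarrow> x + w \<in> K"
proof -
  assume "x \<in> interior K"
  then obtain e where e: "e > 0" "cball x e \<subseteq> K" using mem_interior_cball by blast
  show ?thesis
  proof (intro exI[of _ e] conjI allI impI e(1))
    fix w :: "real^2" assume "norm w \<le> e"
    then have "x + w \<in> cball x e" by (simp add: dist_norm)
    then show "x + w \<in> K" using e(2) by blast
  qed
qed

lemma push_out:
  assumes "x \<in> interior K" "w \<noteq> 0"
  obtains d where "d > 0" "x + d *\<^sub>R w \<in> K"
proof -
  obtain e where e: "e > 0" "\<And>z. norm z \<le> e \<Longrightarrow> x + z \<in> K" using int_cball[OF assms(1)] by blast
  have "norm ((e / norm w) *\<^sub>R w) \<le> e" using assms(2) e(1) by simp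
  then have "x + (e / norm w) *\<^sub>R w \<in> K" by (rule e(2))
  moreover have "e / norm w > 0" using assms(2) e(1) by simp
  ultimately show ?thesis using that by blast
qed

lemma not_int_s:
  assumes "x \<in> K" "Xc x = a * Yc x" shows "x \<notin> interior K"
proof
  assume xi: "x \<in> interior K"
  define w where "w = (-1) *\<^sub>R uu + a *\<^sub>R n"
  have wu: "w \<bullet> uu = -1" and wn: "w \<bullet> n = a"
    by (simp_all add: w_def inner_add_left inner_diff_left uu_norm nu nn un)
  have "w \<noteq> 0" using wu by auto
  then obtain d where d: "d > 0" "x + d *\<^sub>R w \<in> K" using push_out[OF xi] by blast
  have "a * Yc (x + d *\<^sub>R w) \<le> Xc (x + d *\<^sub>R w)" using supp'[OF d(2)] by blast
  then have "a * Yc x + d * (a * a) \<le> Xc x - d" by (simp add: Xc_add Yc_add wu wn algebra_simps)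
  then have "d * (a * a) + d \<le> 0" using assms(2) by simp
  moreover have "0 \<le> d * (a * a)" using d(1) by simp
  ultimately show False using d(1) by simp
qed

lemma not_int_t:
  assumes "x \<in> K" "Xc x = L - b * Yc x" shows "x \<notin> interior K"
proof
  assume xi: "x \<in> interior K"
  define w where "w = uu + b *\<^sub>R n"
  have wu: "w \<bullet> uu = 1" and wn: "w \<bullet> n = b"
    by (simp_all add: w_def inner_add_left inner_diff_left uu_norm nu nn un)
  have "w \<noteq> 0" using wu by auto
  then obtain d where d: "d > 0" "x + d *\<^sub>R w \<in> K" using push_out[OF xi] by blast
  have "Xc (x + d *\<^sub>R w) \<le> L - b * Yc (x + d *\<^sub>R w)" using supp'[OF d(2)] by blast
  then have "Xc x + d \<le> L - b * Yc x - d * (b * b)" by (simp add: Xc_add Yc_add wu wn algebra_simps)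
  then have "d * (b * b) + d \<le> 0" using assms(2) by simp
  moreover have "0 \<le> d * (b * b)" using d(1) by simp
  ultimately show False using d(1) by simp
qed

lemma vvn: "vv \<bullet> n = 1" by (simp add: vv_def inner_add_left un nn)

lemma not_int_top:
  assumes x: "x \<in> {0..1}" shows "mm x + rho x *\<^sub>R vv \<notin> interior K"
proof
  assume xi: "mm x + rho x *\<^sub>R vv \<in> interior K"
  have "vv \<noteq> 0" using vvn by auto
  then obtain d where d: "d > 0" "mm x + rho x *\<^sub>R vv + d *\<^sub>R vv \<in> K" using push_out[OF xi] by blast
  then have "rho x + d \<in> Rs x" using rho_props(2)[OF x] by (simp add: Rs_def algebra_simps)
  then have "rho x + d \<le> rho x" using rho_props(4)[OF x] by blast
  then show False using d(1) by simp
qed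

lemma frontierI: "x \<in> K \<Longrightarrow> x \<notin> interior K \<Longrightarrow> x \<in> frontier K"
  using cpt by (simp add: frontier_def compact_imp_closed closure_closed)

lemma rho_seg: "x \<in> {0..1} \<Longrightarrow> 0 \<le> r \<Longrightarrow> r \<le> rho x \<Longrightarrow> mm x + r *\<^sub>R vv \<in> K"
proof -
  assume x: "x \<in> {0..1}" and r: "0 \<le> r" "r \<le> rho x"
  show ?thesis
  proof (cases "rho x = 0")
    case True then show ?thesis using r mmK[OF x] by simp
  next
    case False
    then have rp: "rho x > 0" using rho_props(2)[OF x] by simp
    define l where "l = r / rho x"
    have l: "0 \<le> l" "l \<le> 1" using r rp by (auto simp: l_def)
    have "(1 - l) *\<^sub>R mm x + l *\<^sub>R (mm x + rho x *\<^sub>R vv) \<in> K"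
      using cvx mmK[OF x] rho_K[OF x] l by (simp add: convex_def)
    moreover have "(1 - l) *\<^sub>R mm x + l *\<^sub>R (mm x + rho x *\<^sub>R vv) = mm x + r *\<^sub>R vv"
      using rp by (simp add: l_def algebra_simps)
    ultimately show ?thesis by simp
  qed
qed

end

context chord begin

definition "sg = rho 0"
definition "sg' = rho 1"
definition "TT = sg + 1 + sg'"
definition "Xf y = min 1 (max 0 (y - sg))"
definition "Yf y = rho (Xf y) - max 0 (sg - y) - max 0 (y - sg - 1)"
definition "G x = mm (Xf (TT * x)) + Yf (TT * x) *\<^sub>R vv"

lemma sg0: "0 \<le> sg" "sg \<le> DD" using rho_props(2,3)[of 0] by (auto simp: sg_def)
lemma sg'0: "0 \<le> sg'" "sg' \<le> DD" using rho_props(2,3)[of 1] by (auto simp: sg'_def)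
lemma TTpos: "1 \<le> TT" using sg0 sg'0 by (simp add: TT_def)

lemma Xf_rng: "Xf y \<in> {0..1}" by (simp add: Xf_def)

lemma Xf_mono: "y \<le> z \<Longrightarrow> Xf y \<le> Xf z" by (simp add: Xf_def)

lemma G_cont: "continuous_on {0..1} G"
proof -
  have c1: "continuous_on {0..1} (\<lambda>x. Xf (TT * x))"
    unfolding Xf_def by (intro continuous_intros)
  have c2: "continuous_on {0..1} (\<lambda>x. rho (Xf (TT * x)))"
    by (rule continuous_on_compose2[OF rho_cont c1]) (use Xf_rng in auto)
  show ?thesis unfolding G_def Yf_def mm_def
    using c1 c2 by (intro continuous_intros) auto
qed

lemma G_X: "Xc (G x) = Xf (TT * x) * L + Yf (TT * x) * kk" by (simp add: G_def Xc_pt)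
lemma G_Y: "Yc (G x) = Yf (TT * x)" by (simp add: G_def Yc_pt)

lemma Yf_low: "y \<le> sg \<Longrightarrow> Xf y = 0 \<and> Yf y = y"
  using sg0 by (simp add: Xf_def Yf_def sg_def)
lemma Yf_high: "sg + 1 \<le> y \<Longrightarrow> Xf y = 1 \<and> Yf y = sg' - (y - sg - 1)"
  using sg0 by (simp add: Xf_def Yf_def sg'_def)
lemma Yf_mid: "sg \<le> y \<Longrightarrow> y \<le> sg + 1 \<Longrightarrow> Xf y = y - sg \<and> Yf y = rho (y - sg)"
  by (simp add: Xf_def Yf_def)

lemma Yf_inj: "Xf y = Xf z \<Longrightarrow> Yf y = Yf z \<Longrightarrow> y = z"
proof -
  assume h: "Xf y = Xf z" "Yf y = Yf z"
  consider "y \<le> sg" | "sg + 1 \<le> y" | "sg < y" "y < sg + 1" by linarith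
  then show "y = z"
  proof cases
    case 1
    then have "Xf y = 0" using Yf_low by blast
    then have "z \<le> sg" using h(1) by (simp add: Xf_def split: if_splits)
    then show ?thesis using 1 h Yf_low by metis
  next
    case 2
    then have "Xf y = 1" using Yf_high by blast
    then have "sg + 1 \<le> z" using h(1) by (simp add: Xf_def split: if_splits)
    then show ?thesis using 2 h Yf_high by fastforce
  next
    case 3
    then have "Xf y = y - sg" by (simp add: Xf_def)
    then show ?thesis using h(1) 3 by (simp add: Xf_def split: if_splits)
  qed
qed

lemma G_inj: "inj_on G {0..1}"
proof (rule inj_onI)
  fix x y assume x: "x \<in> {0..1}" and y: "y \<in> {0..1}" and e: "G x = G y"
  have h1: "Yf (TT * x) = Yf (TT * y)" using G_Y[of x] G_Y[of y] e by simp
  have "Xc (G x) = Xc (G y)" using e by simp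
  then have "Xf (TT * x) * L + Yf (TT * x) * kk = Xf (TT * y) * L + Yf (TT * y) * kk"
    by (simp only: G_X)
  then have "Xf (TT * x) * L = Xf (TT * y) * L" using h1 by simp
  then have "Xf (TT * x) = Xf (TT * y)" using Lpos by simp
  with h1 have "TT * x = TT * y" using Yf_inj by blast
  then show "x = y" using TTpos by simp
qed

lemma G_front: "x \<in> {0..1} \<Longrightarrow> G x \<in> frontier K"
proof -
  assume x: "x \<in> {0..1}"
  define y where "y = TT * x"
  have y: "0 \<le> y" "y \<le> TT" using x TTpos by (auto simp: y_def)
  consider "y \<le> sg" | "sg + 1 \<le> y" | "sg < y" "y < sg + 1" by linarith
  then show ?thesis
  proof cases
    case 1
    then have G: "G x = mm 0 + y *\<^sub>R vv" using Yf_low[OF 1] by (simp add: G_def y_def)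
    have inK: "G x \<in> K" unfolding G using rho_seg[of 0 y] 1 y by (simp add: sg_def)
    have "Xc (G x) = a * Yc (G x)"
    proof (cases "y = 0")
      case True then show ?thesis by (simp add: G mm_def Xc_def Yc_def)
    next
      case False
      then have sgp: "0 < sg" using 1 y by simp
      have "mm 0 + sg *\<^sub>R vv \<in> K" using rho_K[of 0] by (simp add: sg_def)
      then have "a * sg \<le> sg * kk" using supp'[of "mm 0 + sg *\<^sub>R vv"] by (simp add: Xc_pt Yc_pt)
      then have "a \<le> kk" using sgp by (simp add: mult.commute)
      then have "kk = a" using ab by (simp add: kk_def)
      then show ?thesis by (simp add: G Xc_pt Yc_pt)
    qed
    then show ?thesis using not_int_s inK frontierI by blast
  next
    case 2
    define y' where "y' = sg' - (y - sg - 1)"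
    have y': "0 \<le> y'" "y' \<le> sg'" using 2 y by (auto simp: y'_def TT_def)
    then have G: "G x = mm 1 + y' *\<^sub>R vv" using Yf_high[OF 2] by (simp add: G_def y_def y'_def)
    have inK: "G x \<in> K" unfolding G using rho_seg[of 1 y'] y' by (simp add: sg'_def)
    have "Xc (G x) = L - b * Yc (G x)"
    proof (cases "y' = 0")
      case True then show ?thesis using Xc_pt[of 1 0] Yc_pt[of 1 0] by (simp add: G)
    next
      case False
      then have sgp: "0 < sg'" using y' by simp
      have "mm 1 + sg' *\<^sub>R vv \<in> K" using rho_K[of 1] by (simp add: sg'_def)
      then have "L + sg' * kk \<le> L - b * sg'" using supp'[of "mm 1 + sg' *\<^sub>R vv"] by (simp add: Xc_pt Yc_pt)
      then have "sg' * (kk + b) \<le> 0" by (simp add: algebra_simps)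
      then have "kk + b \<le> 0" using sgp by (simp add: mult_le_0_iff)
      then have "a + b \<le> 0" by (simp add: kk_def field_simps)
      then have "a = - b" using ab by linarith
      then have "kk = - b" unfolding kk_def by simp
      then show ?thesis by (simp add: G Xc_pt Yc_pt)
    qed
    then show ?thesis using not_int_t inK frontierI by blast
  next
    case 3
    have z: "y - sg \<in> {0..1}" using 3 by simp
    have G: "G x = mm (y - sg) + rho (y - sg) *\<^sub>R vv" using Yf_mid[of y] 3 by (simp add: G_def y_def)
    show ?thesis unfolding G using rho_K[OF z] not_int_top[OF z] frontierI by blast
  qed
qed

lemma G0: "G 0 = s" using Yf_low[of 0] sg0 by (simp add: G_def mm_def)
lemma G1: "G 1 = t"
proof -
  have "sg + 1 \<le> TT" using sg'0 by (simp add: TT_def)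
  then have "Xf TT = 1" "Yf TT = 0" using Yf_high[of TT] by (auto simp: TT_def)
  then show ?thesis by (simp add: G_def mm_def)
qed

lemma G_arc: "arc G" unfolding arc_def path_def using G_cont G_inj by simp

end

context chord begin

lemma G_form: "G x = s + Xf (TT * x) *\<^sub>R (t - s) + Yf (TT * x) *\<^sub>R vv"
  by (simp add: G_def mm_def)

lemma G_length:
  assumes tau: "tau \<in> {0..1}" and mx: "\<And>y. y \<in> {0..1} \<Longrightarrow> rho y \<le> rho tau"
  shows "curve_length G \<le> ereal (L + norm vv * (2 * rho tau))"
proof -
  define RR where "RR = rho tau"
  have "curve_length G \<le> ereal (norm (t - s) + norm vv * (2 * RR))"
  proof (rule graph_length[OF G_form])
    show "\<And>x y. 0 \<le> x \<Longrightarrow> x \<le> y \<Longrightarrow> y \<le> 1 \<Longrightarrow> Xf (TT * x) \<le> Xf (TT * y)"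
      using TTpos by (intro Xf_mono) (simp add: mult_left_mono)
    show "Xf (TT * 0) = 0" using sg0 by (simp add: Xf_def)
    show "Xf (TT * 1) = 1" using sg0 sg'0 by (simp add: Xf_def TT_def)
  next
    fix n and tt :: "nat \<Rightarrow> real"
    assume h: "tt 0 = 0" "tt n = 1" "\<forall>i<n. tt i \<le> tt (Suc i)"
    have rng: "\<forall>i\<le>n. tt i \<in> {0..1}" using part_range[OF h] by blast
    define F where "F x = rho (Xf (TT * x))" for x
    define A where "A x = max 0 (sg - TT * x)" for x
    define B where "B x = max 0 (TT * x - sg - 1)" for x
    have Yd: "Yf (TT * x) = F x - A x - B x" for x by (simp add: Yf_def F_def A_def B_def)
    have tri: "\<bar>Yf (TT * y) - Yf (TT * x)\<bar> \<le> \<bar>F y - F x\<bar> + \<bar>(- A y) - (- A x)\<bar> + \<bar>B y - B x\<bar>" for x y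
      unfolding Yd by linarith
    have sF: "(\<Sum>i<n. \<bar>F (tt (Suc i)) - F (tt i)\<bar>) \<le> 2 * RR - F (tt 0) - F (tt n)"
    proof (rule tv_qc[OF h(3) rng])
      fix x y z :: real assume xyz: "0 \<le> x" "x \<le> y" "y \<le> z" "z \<le> 1"
      have "Xf (TT * x) \<le> Xf (TT * y)" "Xf (TT * y) \<le> Xf (TT * z)"
        using xyz TTpos by (auto intro!: Xf_mono mult_left_mono)
      then show "min (F x) (F z) \<le> F y" unfolding F_def
        using qc_rho Xf_rng by (meson atLeastAtMost_iff)
    next
      fix x :: real assume "x \<in> {0..1}"
      show "F x \<le> RR" unfolding F_def RR_def using mx Xf_rng by blast
    qed
    have F0: "F 0 = sg" using sg0 by (simp add: F_def Xf_def sg_def)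
    have F1: "F 1 = sg'" using sg0 sg'0 by (simp add: F_def Xf_def sg'_def TT_def)
    have sA: "(\<Sum>i<n. \<bar>(- A (tt (Suc i))) - (- A (tt i))\<bar>) = (- A (tt n)) - (- A (tt 0))"
    proof (rule tv_mono[OF h(3)])
      fix x y :: real assume "x \<le> y"
      then have "TT * x \<le> TT * y" using TTpos by (simp add: mult_left_mono)
      then show "- A x \<le> - A y" by (simp add: A_def)
    qed
    have sB: "(\<Sum>i<n. \<bar>B (tt (Suc i)) - B (tt i)\<bar>) = B (tt n) - B (tt 0)"
    proof (rule tv_mono[OF h(3)])
      fix x y :: real assume "x \<le> y"
      then have "TT * x \<le> TT * y" using TTpos by (simp add: mult_left_mono)
      then show "B x \<le> B y" by (simp add: B_def)
    qed
    have A0: "A 0 = sg" "A 1 = 0" using sg0 sg'0 by (auto simp: A_def TT_def)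
    have B0: "B 0 = 0" "B 1 = sg'" using sg0 sg'0 by (auto simp: B_def TT_def)
    have "(\<Sum>i<n. \<bar>Yf (TT * tt (Suc i)) - Yf (TT * tt i)\<bar>) \<le>
        (\<Sum>i<n. \<bar>F (tt (Suc i)) - F (tt i)\<bar> + \<bar>(- A (tt (Suc i))) - (- A (tt i))\<bar> + \<bar>B (tt (Suc i)) - B (tt i)\<bar>)"
      by (intro sum_mono tri)
    also have "\<dots> = (\<Sum>i<n. \<bar>F (tt (Suc i)) - F (tt i)\<bar>) + (\<Sum>i<n. \<bar>(- A (tt (Suc i))) - (- A (tt i))\<bar>)
         + (\<Sum>i<n. \<bar>B (tt (Suc i)) - B (tt i)\<bar>)" by (simp add: sum.distrib)
    also have "\<dots> \<le> 2 * RR" using sF sA sB h(1,2) F0 F1 A0 B0 by simp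
    finally show "(\<Sum>i<n. \<bar>Yf (TT * tt (Suc i)) - Yf (TT * tt i)\<bar>) \<le> 2 * RR" .
  qed
  moreover have "norm (t - s) = L" by (simp add: L_def dist_norm norm_minus_commute)
  ultimately show ?thesis by (simp add: RR_def)
qed

end

context chord begin

lemma width_vec:
  assumes p: "p \<noteq> 0" and bnd: "\<And>x. x \<in> K \<Longrightarrow> lo \<le> p \<bullet> (x - s) \<and> p \<bullet> (x - s) \<le> hi"
  shows "width K * norm p \<le> hi - lo"
proof -
  define w where "w = (1 / norm p) *\<^sub>R p"
  have np: "norm p > 0" using p by simp
  have wn: "norm w = 1" using np by (simp add: w_def)
  have "width K \<le> (hi + p \<bullet> s) / norm p - (lo + p \<bullet> s) / norm p"
  proof (rule width_le[OF wn])
    show "K \<noteq> {}" using sK by auto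
    fix x assume x: "x \<in> K"
    have e: "w \<bullet> x = (p \<bullet> (x - s) + p \<bullet> s) / norm p" by (simp add: w_def inner_diff_right)
    show "(lo + p \<bullet> s) / norm p \<le> w \<bullet> x \<and> w \<bullet> x \<le> (hi + p \<bullet> s) / norm p"
      unfolding e using bnd[OF x] np by (simp add: divide_right_mono)
  qed
  also have "\<dots> = (hi - lo) / norm p" by (simp add: diff_divide_distrib[symmetric])
  finally show ?thesis using np by (simp add: pos_le_divide_eq)
qed

lemma geo:
  assumes tau: "tau \<in> {0..1}" and w0: "0 \<le> width K"
  shows "rho tau * norm vv * width K \<le> DD * L"
proof -
  define RR where "RR = rho tau"
  define P where "P = mm tau + RR *\<^sub>R vv"
  have PK: "P \<in> K" using rho_K[OF tau] by (simp add: P_def RR_def)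
  have R0: "0 \<le> RR" "RR \<le> DD" using rho_props(2,3)[OF tau] by (auto simp: RR_def)
  have sP: "a * RR \<le> tau * L + RR * kk" "tau * L + RR * kk \<le> L - b * RR"
    using supp'[OF PK] by (auto simp: P_def Xc_pt Yc_pt)
  have kk2: "RR * kk = RR * a / 2 - RR * b / 2" unfolding kk_def by (simp add: field_simps)
  have h1: "(a + b) * RR \<le> L" using sP kk2 by (simp add: algebra_simps)
  have h3: "RR - DD \<le> Yc x" if x: "x \<in> K" for x
  proof -
    have "Yc P - Yc x \<le> dist P x" by (rule Yc_diff)
    moreover have "dist P x \<le> DD" using distD PK x by blast
    moreover have "Yc P = RR" by (simp add: P_def Yc_pt)
    ultimately show ?thesis by linarith
  qed
  define E where "E = L + (a + b) * (DD - RR)"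
  have ab3: "(a + b) * (RR - DD) \<le> (a + b) * Yc x" if "x \<in> K" for x
    using h3[OF that] ab by (intro mult_left_mono) auto
  have Xv: "uu \<bullet> (x - s) = Xc x" "n \<bullet> (x - s) = Yc x" for x by (simp_all add: Xc_def Yc_def inner_commute)
  have wb: "width K * sqrt (1 + b^2) \<le> E"
  proof -
    define p where "p = uu + b *\<^sub>R n"
    have pn: "norm p = sqrt (1 + b^2)"
    proof -
      have "p \<bullet> p = 1 + b^2"
        by (simp add: p_def inner_add_left inner_add_right uu_norm un nu nn power2_eq_square)
      then show ?thesis by (simp add: norm_eq_sqrt_inner)
    qed
    have "p \<noteq> 0"
    proof
      assume "p = 0"
      then have "sqrt (1 + b^2) = 0" using pn by simp
      moreover have "0 < 1 + b^2" by (simp add: add_pos_nonneg)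
      ultimately show False by simp
    qed
    then have "width K * norm p \<le> L - (- (a + b) * (DD - RR))"
    proof (rule width_vec)
      fix x assume x: "x \<in> K"
      have e: "p \<bullet> (x - s) = Xc x + b * Yc x" by (simp only: p_def inner_add_left inner_scaleR_left Xv)
      show "- (a + b) * (DD - RR) \<le> p \<bullet> (x - s) \<and> p \<bullet> (x - s) \<le> L"
        unfolding e using supp'[OF x] ab3[OF x] by (simp add: algebra_simps)
    qed
    then show ?thesis by (simp add: pn E_def algebra_simps)
  qed
  have wa: "width K * sqrt (1 + a^2) \<le> E"
  proof -
    define p where "p = a *\<^sub>R n - uu"
    have pn: "norm p = sqrt (1 + a^2)"
    proof -
      have "p \<bullet> p = 1 + a^2"
        by (simp add: p_def inner_diff_left inner_diff_right uu_norm un nu nn power2_eq_square)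
      then show ?thesis by (simp add: norm_eq_sqrt_inner)
    qed
    have "p \<noteq> 0"
    proof
      assume "p = 0"
      then have "sqrt (1 + a^2) = 0" using pn by simp
      moreover have "0 < 1 + a^2" by (simp add: add_pos_nonneg)
      ultimately show False by simp
    qed
    then have "width K * norm p \<le> 0 - (- L - (a + b) * (DD - RR))"
    proof (rule width_vec)
      fix x assume x: "x \<in> K"
      have e: "p \<bullet> (x - s) = a * Yc x - Xc x" by (simp only: p_def inner_diff_left inner_scaleR_left Xv)
      show "- L - (a + b) * (DD - RR) \<le> p \<bullet> (x - s) \<and> p \<bullet> (x - s) \<le> 0"
        unfolding e using supp'[OF x] ab3[OF x] by (simp add: algebra_simps)
    qed
    then show ?thesis by (simp add: pn E_def algebra_simps)
  qed
  have key: "RR * E \<le> DD * L"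
  proof -
    have "(a + b) * RR * (DD - RR) \<le> L * (DD - RR)" using h1 R0 by (intro mult_right_mono) auto
    then show ?thesis by (simp add: E_def algebra_simps)
  qed
  have nv: "norm vv \<le> sqrt (1 + a^2) \<or> norm vv \<le> sqrt (1 + b^2)"
  proof (cases "\<bar>b\<bar> \<le> \<bar>a\<bar>")
    case True
    then have "\<bar>kk\<bar> \<le> \<bar>a\<bar>" by (simp add: kk_def)
    then have "kk^2 \<le> a^2" by (simp add: abs_le_square_iff)
    then show ?thesis by (simp add: vv_norm)
  next
    case False
    then have "\<bar>kk\<bar> \<le> \<bar>b\<bar>" by (simp add: kk_def)
    then have "kk^2 \<le> b^2" by (simp add: abs_le_square_iff)
    then show ?thesis by (simp add: vv_norm)
  qed
  have "norm vv * width K \<le> E"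
    using nv wa wb w0 by (smt (verit) mult.commute mult_right_mono)
  then have "RR * (norm vv * width K) \<le> RR * E" using R0 by (intro mult_left_mono) auto
  then show ?thesis using key by (simp add: RR_def mult.assoc)
qed

end

lemma rot_facts:
  fixes u :: "real^2"
  assumes u: "norm u = 1"
  defines "n \<equiv> (\<chi> i. if i = 1 then - (u$2) else u$1) :: real^2"
  shows "n \<bullet> u = 0" "norm n = 1" "\<And>z. z = (z \<bullet> u) *\<^sub>R u + (z \<bullet> n) *\<^sub>R n"
proof -
  have uu: "u$1 * u$1 + u$2 * u$2 = 1"
  proof -
    have "u \<bullet> u = 1" using u by (simp add: norm_eq_1)
    then show ?thesis by (simp add: inner_vec_def sum_2)
  qed
  show "n \<bullet> u = 0" by (simp add: n_def inner_vec_def sum_2)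
  show "norm n = 1" using uu by (simp add: n_def norm_eq_1 inner_vec_def sum_2 algebra_simps)
  fix z :: "real^2"
  show "z = (z \<bullet> u) *\<^sub>R u + (z \<bullet> n) *\<^sub>R n"
  proof (subst vec_eq_iff, rule allI)
    fix i :: 2
    have "z$1 = (z$1 * u$1 + z$2 * u$2) * u$1 + (z$1 * (- u$2) + z$2 * u$1) * (- u$2)"
      using uu by algebra
    moreover have "z$2 = (z$1 * u$1 + z$2 * u$2) * u$2 + (z$1 * (- u$2) + z$2 * u$1) * u$1"
      using uu by algebra
    ultimately show "z$i = ((z \<bullet> u) *\<^sub>R u + (z \<bullet> n) *\<^sub>R n)$i"
      using exhaust_2[of i] by (auto simp: n_def inner_vec_def sum_2)
  qed
qed

context chord begin
lemma chord_main:
  assumes w: "0 < width K"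
  shows "\<exists>g. arc g \<and> path_image g \<subseteq> frontier K \<and> pathstart g = s \<and> pathfinish g = t \<and>
     curve_length g \<le> ereal (dist s t * (1 + 2 * diameter K / width K))"
proof -
  obtain tau where tau: "tau \<in> {0..1}" "\<And>y. y \<in> {0..1} \<Longrightarrow> rho y \<le> rho tau"
    using continuous_attains_sup[OF compact_Icc _ rho_cont] by fastforce
  have c: "curve_length G \<le> ereal (L + norm vv * (2 * rho tau))" by (rule G_length[OF tau])
  have "rho tau * norm vv * width K \<le> DD * L" using geo[OF tau(1)] w by simp
  then have "rho tau * norm vv \<le> DD * L / width K" using w by (simp add: pos_le_divide_eq)
  moreover have "L * (1 + 2 * DD / width K) = L + 2 * (DD * L / width K)"
    using w by (simp add: field_simps)
  moreover have "norm vv * (2 * rho tau) = 2 * (rho tau * norm vv)" by simp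
  ultimately have "L + norm vv * (2 * rho tau) \<le> L * (1 + 2 * DD / width K)"
    by linarith
  then have "curve_length G \<le> ereal (dist s t * (1 + 2 * diameter K / width K))"
    using c by (simp add: L_def DD_def order_trans)
  moreover have "path_image G \<subseteq> frontier K" using G_front by (auto simp: path_image_def)
  ultimately show ?thesis using G_arc G0 G1 by (auto simp: pathstart_def pathfinish_def)
qed
end

lemma chord_exists:
  fixes K :: "(real^2) set" and s t n :: "real^2" and a b :: real
  assumes cvx: "convex K" and cpt: "compact K" and sK: "s \<in> K" and tK: "t \<in> K" and st: "s \<noteq> t"
    and nunit: "norm n = 1" and nort: "n \<bullet> (t - s) = 0"
    and supp: "\<And>x. x \<in> K \<Longrightarrow> a * ((x - s) \<bullet> n) \<le> (x - s) \<bullet> ((1 / dist s t) *\<^sub>R (t - s))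
                   \<and> (x - s) \<bullet> ((1 / dist s t) *\<^sub>R (t - s)) \<le> dist s t - b * ((x - s) \<bullet> n)"
    and w: "0 < width K"
  shows "\<exists>g. arc g \<and> path_image g \<subseteq> frontier K \<and> pathstart g = s \<and> pathfinish g = t \<and>
     curve_length g \<le> ereal (dist s t * (1 + 2 * diameter K / width K))"
proof (cases "0 \<le> a + b")
  case True
  interpret chord K s t n a b using assms True by unfold_locales auto
  show ?thesis using chord_main[OF w] .
next
  case False
  have supp': "\<And>x. x \<in> K \<Longrightarrow> (- a) * ((x - s) \<bullet> (- n)) \<le> (x - s) \<bullet> ((1 / dist s t) *\<^sub>R (t - s))
                   \<and> (x - s) \<bullet> ((1 / dist s t) *\<^sub>R (t - s)) \<le> dist s t - (- b) * ((x - s) \<bullet> (- n))"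
    using supp by simp
  interpret chord K s t "- n" "- a" "- b" using assms False supp' by unfold_locales auto
  show ?thesis using chord_main[OF w] .
qed

lemma pair_bound:
  fixes K :: "(real^2) set" and s t :: "real^2"
  assumes cvx: "convex K" and cpt: "compact K" and int: "interior K \<noteq> {}"
    and sF: "s \<in> frontier K" and tF: "t \<in> frontier K" and st: "s \<noteq> t"
    and w: "0 < width K" and D0: "0 \<le> diameter K"
  shows "geod K s t \<le> ereal (dist s t * (1 + 2 * diameter K / width K))"
proof -
  define c where "c = 1 + 2 * diameter K / width K"
  have c1: "1 \<le> c" using w D0 by (simp add: c_def)
  have clK: "closure K = K" using cpt by (simp add: compact_imp_closed closure_closed)
  have sK: "s \<in> K" and tK: "t \<in> K" using sF tF clK by (auto simp: frontier_def)
  have sI: "s \<notin> interior K" and tI: "t \<notin> interior K" using sF tF by (auto simp: frontier_def)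
  define L where "L = dist s t"
  have Lp: "0 < L" using st by (simp add: L_def)
  define u where "u = (1 / L) *\<^sub>R (t - s)"
  have un: "norm u = 1" using Lp by (simp add: u_def L_def dist_norm norm_minus_commute)
  define n :: "real^2" where "n = (\<chi> i. if i = 1 then - (u$2) else u$1)"
  have nu: "n \<bullet> u = 0" and nn: "norm n = 1" and dec: "\<And>z. z = (z \<bullet> u) *\<^sub>R u + (z \<bullet> n) *\<^sub>R n"
    using rot_facts[OF un] unfolding n_def by auto
  have tsu: "t - s = L *\<^sub>R u" using Lp by (simp add: u_def)
  have tsn: "n \<bullet> (t - s) = 0" using nu by (simp add: tsu)
  have uu1: "u \<bullet> u = 1" using un by (simp add: norm_eq_1)
  have tsu': "(t - s) \<bullet> u = L" using uu1 by (simp add: tsu)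
  have tsn': "(t - s) \<bullet> n = 0" using tsn by (simp add: inner_commute)
  have lin: "\<And>p z. p \<bullet> z = (p \<bullet> u) * (z \<bullet> u) + (p \<bullet> n) * (z \<bullet> n)"
  proof -
    fix p z :: "real^2"
    have "p \<bullet> z = p \<bullet> ((z \<bullet> u) *\<^sub>R u + (z \<bullet> n) *\<^sub>R n)" by (metis dec)
    then show "p \<bullet> z = (p \<bullet> u) * (z \<bullet> u) + (p \<bullet> n) * (z \<bullet> n)"
      by (simp only: inner_add_right inner_scaleR_right mult.commute)
  qed
  obtain g where g: "arc g" "path_image g \<subseteq> frontier K" "pathstart g = s" "pathfinish g = t"
      "curve_length g \<le> ereal (L * c)"
  proof (cases "(\<forall>x\<in>K. 0 \<le> (x - s) \<bullet> n) \<or> (\<forall>x\<in>K. (x - s) \<bullet> n \<le> 0)")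
    case True
    define g where "g = linepath s t"
    have "curve_length g \<le> ereal (norm (t - s) + norm (0::real^2) * 0)"
    proof (rule graph_length[where X = "\<lambda>x. x" and Y = "\<lambda>x. 0"])
      show "\<And>x. g x = s + x *\<^sub>R (t - s) + 0 *\<^sub>R 0" by (simp add: g_def linepath_def algebra_simps)
    qed auto
    moreover have "norm (t - s) = L" by (simp add: L_def dist_norm norm_minus_commute)
    moreover have "L \<le> L * c" using c1 Lp by simp
    ultimately have gl: "curve_length g \<le> ereal (L * c)"
      by (metis add.right_neutral mult_zero_right ereal_less_eq(3) order_trans)
    have "path_image g \<subseteq> frontier K"
    proof
      fix z assume "z \<in> path_image g"
      then have z: "z \<in> closed_segment s t" by (simp add: g_def)
      then have zK: "z \<in> K" using cvx sK tK by (meson closed_segment_subset subsetD)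
      obtain l where l: "z = (1 - l) *\<^sub>R s + l *\<^sub>R t" using z by (auto simp: in_segment)
      have zn: "(z - s) \<bullet> n = 0"
      proof -
        have "z - s = l *\<^sub>R (t - s)" by (simp add: l algebra_simps)
        then show ?thesis using tsn' by simp
      qed
      have "z \<notin> interior K"
      proof
        assume "z \<in> interior K"
        then obtain e where e: "e > 0" "cball z e \<subseteq> K" using mem_interior_cball by blast
        have "z + e *\<^sub>R n \<in> cball z e" "z - e *\<^sub>R n \<in> cball z e" using e(1) nn by (simp_all add: dist_norm)
        then have p1: "z + e *\<^sub>R n \<in> K" and p2: "z - e *\<^sub>R n \<in> K" using e(2) by auto
        have "(z + e *\<^sub>R n - s) \<bullet> n = e" "(z - e *\<^sub>R n - s) \<bullet> n = - e"
          using zn nn by (simp_all add: inner_diff_left inner_add_left norm_eq_1)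
        then show False
        proof -
          assume h: "(z + e *\<^sub>R n - s) \<bullet> n = e" "(z - e *\<^sub>R n - s) \<bullet> n = - e"
          show False
          proof (cases "\<forall>x\<in>K. 0 \<le> (x - s) \<bullet> n")
            case True then show False using p2 h e(1) by fastforce
          next
            case False then have "\<forall>x\<in>K. (x - s) \<bullet> n \<le> 0" using \<open>(\<forall>x\<in>K. 0 \<le> (x - s) \<bullet> n) \<or> (\<forall>x\<in>K. (x - s) \<bullet> n \<le> 0)\<close> by blast
            then show False using p1 h e(1) by fastforce
          qed
        qed
      qed
      then show "z \<in> frontier K" using zK clK by (simp add: frontier_def)
    qed
    then show ?thesis using that[of g] gl arc_linepath[OF st] by (simp add: g_def)
  next
    case False
    then obtain x1 x2 where x1: "x1 \<in> K" "0 < (x1 - s) \<bullet> n" and x2: "x2 \<in> K" "(x2 - s) \<bullet> n < 0"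
      by (auto simp: not_le)
    have riK: "rel_interior K = interior K" using rel_interior_nonempty_interior[OF int] .
    have scl: "s \<in> closure K" using sK clK by simp
    have sri: "s \<notin> rel_interior K" using sI riK by simp
    obtain a1 where a1: "a1 \<noteq> 0" "\<And>y. y \<in> closure K \<Longrightarrow> a1 \<bullet> s \<le> a1 \<bullet> y"
      using supporting_hyperplane_relative_frontier[OF cvx scl sri] by metis
    have tcl: "t \<in> closure K" using tK clK by simp
    have tri: "t \<notin> rel_interior K" using tI riK by simp
    obtain a2 where a2: "a2 \<noteq> 0" "\<And>y. y \<in> closure K \<Longrightarrow> a2 \<bullet> t \<le> a2 \<bullet> y"
      using supporting_hyperplane_relative_frontier[OF cvx tcl tri] by metis
    define p1 where "p1 = a1 \<bullet> u"
    define p2 where "p2 = a1 \<bullet> n"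
    define q1 where "q1 = a2 \<bullet> u"
    define q2 where "q2 = a2 \<bullet> n"
    have hs: "0 \<le> p1 * ((y - s) \<bullet> u) + p2 * ((y - s) \<bullet> n)" if "y \<in> K" for y
    proof -
      have "a1 \<bullet> s \<le> a1 \<bullet> y" using a1(2) that clK by auto
      then have "0 \<le> a1 \<bullet> (y - s)" by (simp add: inner_diff_right)
      then show ?thesis using lin[of a1 "y - s"] by (simp add: p1_def p2_def)
    qed
    have ht: "0 \<le> q1 * ((y - s) \<bullet> u - L) + q2 * ((y - s) \<bullet> n)" if "y \<in> K" for y
    proof -
      have "a2 \<bullet> t \<le> a2 \<bullet> y" using a2(2) that clK by auto
      then have "0 \<le> a2 \<bullet> (y - t)" by (simp add: inner_diff_right)
      moreover have "y - t = (y - s) - (t - s)" by simp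
      ultimately have "0 \<le> a2 \<bullet> ((y - s) - (t - s))" by metis
      then show ?thesis using lin[of a2 "(y - s) - (t - s)"] tsu' tsn'
        by (simp add: q1_def q2_def inner_diff_left algebra_simps)
    qed
    have p1: "0 < p1"
    proof -
      have "0 \<le> p1 * L" using hs[OF tK] tsu' tsn' by simp
      then have "0 \<le> p1" using Lp by (simp add: zero_le_mult_iff)
      moreover have "p1 \<noteq> 0"
      proof
        assume p0: "p1 = 0"
        have "p2 \<noteq> 0"
        proof
          assume "p2 = 0"
          have "a1 \<bullet> a1 = p1 * p1 + p2 * p2" unfolding p1_def p2_def by (rule lin)
          then have "a1 \<bullet> a1 = 0" using p0 \<open>p2 = 0\<close> by simp
          then show False using a1(1) by simp
        qed
        moreover have "0 \<le> p2 * ((x1 - s) \<bullet> n)" "0 \<le> p2 * ((x2 - s) \<bullet> n)"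
          using hs[OF x1(1)] hs[OF x2(1)] p0 by auto
        ultimately show False
        proof (cases "0 < p2")
          case True then have "p2 * ((x2 - s) \<bullet> n) < 0" using x2(2) by (simp add: mult_pos_neg)
          then show False using \<open>0 \<le> p2 * ((x2 - s) \<bullet> n)\<close> by simp
        next
          case False then have "p2 < 0" using \<open>p2 \<noteq> 0\<close> by simp
          then have "p2 * ((x1 - s) \<bullet> n) < 0" using x1(2) by (simp add: mult_neg_pos)
          then show False using \<open>0 \<le> p2 * ((x1 - s) \<bullet> n)\<close> by simp
        qed
      qed
      ultimately show ?thesis by simp
    qed
    have q1: "q1 < 0"
    proof -
      have "0 \<le> q1 * (- L)" using ht[OF sK] by simp
      then have "q1 * L \<le> 0" by simp
      then have "q1 \<le> 0" using Lp by (simp add: mult_le_0_iff)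
      moreover have "q1 \<noteq> 0"
      proof
        assume p0: "q1 = 0"
        have "q2 \<noteq> 0"
        proof
          assume "q2 = 0"
          have "a2 \<bullet> a2 = q1 * q1 + q2 * q2" unfolding q1_def q2_def by (rule lin)
          then have "a2 \<bullet> a2 = 0" using p0 \<open>q2 = 0\<close> by simp
          then show False using a2(1) by simp
        qed
        moreover have "0 \<le> q2 * ((x1 - s) \<bullet> n)" "0 \<le> q2 * ((x2 - s) \<bullet> n)"
          using ht[OF x1(1)] ht[OF x2(1)] p0 by auto
        ultimately show False
        proof (cases "0 < q2")
          case True then have "q2 * ((x2 - s) \<bullet> n) < 0" using x2(2) by (simp add: mult_pos_neg)
          then show False using \<open>0 \<le> q2 * ((x2 - s) \<bullet> n)\<close> by simp
        next
          case False then have "q2 < 0" using \<open>q2 \<noteq> 0\<close> by simp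
          then have "q2 * ((x1 - s) \<bullet> n) < 0" using x1(2) by (simp add: mult_neg_pos)
          then show False using \<open>0 \<le> q2 * ((x1 - s) \<bullet> n)\<close> by simp
        qed
      qed
      ultimately show ?thesis by simp
    qed
    define a where "a = - p2 / p1"
    define b where "b = q2 / q1"
    have supp: "a * ((x - s) \<bullet> n) \<le> (x - s) \<bullet> ((1 / dist s t) *\<^sub>R (t - s))
                   \<and> (x - s) \<bullet> ((1 / dist s t) *\<^sub>R (t - s)) \<le> dist s t - b * ((x - s) \<bullet> n)" if x: "x \<in> K" for x
    proof -
      have uu': "(1 / dist s t) *\<^sub>R (t - s) = u" by (simp add: u_def L_def)
      have A: "a * ((x - s) \<bullet> n) \<le> (x - s) \<bullet> u"
      proof -
        have "- p2 * ((x - s) \<bullet> n) \<le> p1 * ((x - s) \<bullet> u)" using hs[OF x] by simp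
        then have "(- p2 * ((x - s) \<bullet> n)) / p1 \<le> (p1 * ((x - s) \<bullet> u)) / p1"
          using p1 by (intro divide_right_mono) auto
        moreover have "(p1 * ((x - s) \<bullet> u)) / p1 = (x - s) \<bullet> u" using p1 by simp
        moreover have "a * ((x - s) \<bullet> n) = (- p2 * ((x - s) \<bullet> n)) / p1" by (simp add: a_def)
        ultimately show ?thesis by simp
      qed
      have B: "(x - s) \<bullet> u \<le> L - b * ((x - s) \<bullet> n)"
      proof -
        have "(- q1) * ((x - s) \<bullet> u - L) \<le> q2 * ((x - s) \<bullet> n)" using ht[OF x] by simp
        then have "((- q1) * ((x - s) \<bullet> u - L)) / (- q1) \<le> (q2 * ((x - s) \<bullet> n)) / (- q1)"
          using q1 by (intro divide_right_mono) auto
        moreover have "((- q1) * ((x - s) \<bullet> u - L)) / (- q1) = (x - s) \<bullet> u - L" using q1 by simp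
        ultimately have "(x - s) \<bullet> u - L \<le> q2 * ((x - s) \<bullet> n) / (- q1)" by simp
        then show ?thesis by (simp add: b_def)
      qed
      show ?thesis using A B by (simp add: uu' L_def)
    qed
    show ?thesis
      using chord_exists[OF cvx cpt sK tK st nn tsn supp w] that unfolding c_def L_def by blast
  qed
  have "geod K s t \<le> curve_length g"
    unfolding geod_def using g by (intro INF_lower) auto
  then show ?thesis using g(5) by (simp add: c_def L_def)
qed

theorem lemma8:
  fixes K :: "(real^2) set" and l :: real
  assumes "convex_body K" and "0 < l" and "l \<le> 1" and "fat l K"
  shows "geometric_dilation K \<le> ereal (min (pi / l) (2 * (1 / l + 1)))"
proof -
  have cpt: "compact K" and cvx: "convex K" and int: "interior K \<noteq> {}"
    using assms(1) by (auto simp: convex_body_def)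
  define w where "w = width K"
  define D where "D = diameter K"
  have D0: "0 \<le> D" unfolding D_def by (rule diameter_ge_0[OF compact_imp_bounded[OF cpt]])
  have fl: "l \<le> w / D" using assms(4) by (simp add: fat_def w_def D_def)
  then have wD: "0 < w / D" using assms(2) by linarith
  then have Dp: "0 < D" using D0 by (cases "D = 0") auto
  then have wp: "0 < w" using wD by (simp add: zero_less_divide_iff)
  have "l * D \<le> w" using fl Dp by (simp add: pos_le_divide_eq)
  then have "D \<le> w / l" using assms(2) by (simp add: pos_le_divide_eq mult.commute)
  then have Dw: "D / w \<le> 1 / l" using wp assms(2) by (simp add: pos_divide_le_eq field_simps)
  define c where "c = 1 + 2 / l"
  have cc: "1 + 2 * D / w \<le> c" using Dw by (simp add: c_def)
  have cmin: "c \<le> min (pi / l) (2 * (1 / l + 1))"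
  proof -
    have "3 \<le> pi" using pi_gt3 by simp
    then have "1 + 2 \<le> pi" by simp
    then have "l + 2 \<le> pi" using assms(3) by simp
    then have "(l + 2) / l \<le> pi / l" using assms(2) by (intro divide_right_mono) auto
    moreover have "(l + 2) / l = c" using assms(2) by (simp add: c_def field_simps)
    ultimately have "c \<le> pi / l" by simp
    moreover have "c \<le> 2 * (1 / l + 1)" using assms(2) by (simp add: c_def field_simps)
    ultimately show ?thesis by simp
  qed
  have "geometric_dilation K \<le> ereal c"
    unfolding geometric_dilation_def
  proof (rule SUP_least, clarify)
    fix s t assume s: "s \<in> frontier K" and t: "t \<in> frontier K" and st: "s \<noteq> t"
    have g: "geod K s t \<le> ereal (dist s t * (1 + 2 * D / w))"
      using pair_bound[OF cvx cpt int s t st] wp D0 by (simp add: w_def D_def)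
    have dp: "0 < dist s t" using st by simp
    have "dist s t * (1 + 2 * D / w) \<le> dist s t * c" using cc dp by (intro mult_left_mono) auto
    then have "geod K s t \<le> ereal (dist s t) * ereal c" using g by (simp add: order_trans)
    then show "geod K s t / ereal (dist s t) \<le> ereal c"
      using dp by (subst ereal_divide_le_pos) auto
  qed
  also have "\<dots> \<le> ereal (min (pi / l) (2 * (1 / l + 1)))" using cmin by simp
  finally show ?thesis .
qed

end
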